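(* Let $d\ge1$, let $P$ be a probability distribution on $\{0,1\}^d$ with $P(\nu)>0$ for all $\nu$, and fix $\omega\in\{0,1\}^d$. Let $A_\omega$ be the $(2^d-1)\times d$ binary matrix with rows indexed by $\nu\in\{0,1\}^d\setminus\{\omega\}$ and entries $A_\omega(\nu,i)=1$ if $\nu_i\ne\omega_i$ and $0$ otherwise, and let $b_\omega(\nu)=\ln(P(\nu)/P(\omega))$. Then the polyhedron $\{y\in\mathbb{R}^d\mid A_\omega y\le b_\omega\}$ is pointed, i.e. it contains at least one vertex.
   Context: A point $y$ of the polyhedron $\{y: A_\omega y\le b_\omega\}$ is a vertex if there is an invertible $d\times d$ submatrix $A'_\omega$ of $A_\omega$, formed by some $d$ rows, with corresponding subvector $b'_\omega$ of $b_\omega$ (same rows), such that $A'_\omega y=b'_\omega$. *)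

theory Defs
  imports "HOL-Analysis.Analysis"
begin

text \<open>Points of {0,1}^d are vectors \<open>bool ^ 'd\<close> (True = 1); the dimension d is CARD('d) \<ge> 1.
  Rows of A_omega are indexed by \<open>\<nu> \<noteq> \<omega>\<close>.\<close>

definition A_om :: "bool ^ 'd \<Rightarrow> bool ^ 'd \<Rightarrow> 'd \<Rightarrow> real" where
  "A_om \<omega> \<nu> i = (if \<nu> $ i \<noteq> \<omega> $ i then 1 else 0)"

definition b_om :: "(bool ^ 'd \<Rightarrow> real) \<Rightarrow> bool ^ 'd \<Rightarrow> bool ^ 'd \<Rightarrow> real" where
  "b_om P \<omega> \<nu> = ln (P \<nu> / P \<omega>)"

definition polyhedron_om :: "(bool ^ 'd \<Rightarrow> real) \<Rightarrow> bool ^ 'd \<Rightarrow> (real ^ 'd) set" where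
  "polyhedron_om P \<omega> = {y. \<forall>\<nu>. \<nu> \<noteq> \<omega> \<longrightarrow> (\<Sum>i\<in>UNIV. A_om \<omega> \<nu> i * y $ i) \<le> b_om P \<omega> \<nu>}"

definition is_vertex_om :: "(bool ^ 'd \<Rightarrow> real) \<Rightarrow> bool ^ 'd \<Rightarrow> real ^ 'd \<Rightarrow> bool" where
  "is_vertex_om P \<omega> y \<longleftrightarrow> y \<in> polyhedron_om P \<omega> \<and>
     (\<exists>r :: 'd \<Rightarrow> bool ^ 'd. inj r \<and> (\<forall>k. r k \<noteq> \<omega>) \<and>
        invertible ((\<chi> k i. A_om \<omega> (r k) i) :: real ^ 'd ^ 'd) \<and>
        ((\<chi> k i. A_om \<omega> (r k) i) :: real ^ 'd ^ 'd) *v y = (\<chi> k. b_om P \<omega> (r k)))"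

end

theory Submission
  imports Defs
begin

lemma row_sum_eq:
  "(\<Sum>i\<in>UNIV. A_om \<omega> \<nu> i * y $ i) = (\<Sum>i\<in>{i. \<nu> $ i \<noteq> \<omega> $ i}. y $ i)"
proof -
  have "(\<Sum>i\<in>UNIV. A_om \<omega> \<nu> i * y $ i) = (\<Sum>i\<in>UNIV. if i \<in> {i. \<nu> $ i \<noteq> \<omega> $ i} then y $ i else 0)"
    by (intro sum.cong) (auto simp: A_om_def)
  also have "\<dots> = (\<Sum>i\<in>{i. \<nu> $ i \<noteq> \<omega> $ i}. y $ i)"
    by (simp add: sum.If_cases)
  finally show ?thesis .
qed

lemma D_empty:
  assumes "{i. \<nu> $ i \<noteq> \<omega> $ i} \<subseteq> {}" shows "\<nu> = \<omega>"
  using assms by (auto simp: vec_eq_iff)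

lemma claim:
  fixes bb :: "bool ^ 'd \<Rightarrow> real" and \<omega> :: "bool ^ 'd" and I :: "'d set"
  assumes "finite I"
  shows "\<exists>y r. (\<forall>k\<in>I. r k \<noteq> \<omega> \<and> k \<in> {i. r k $ i \<noteq> \<omega> $ i} \<and> {i. r k $ i \<noteq> \<omega> $ i} \<subseteq> I
                  \<and> (\<Sum>i\<in>{i. r k $ i \<noteq> \<omega> $ i}. y $ i) = bb (r k))
     \<and> (\<forall>\<nu>. \<nu> \<noteq> \<omega> \<and> {i. \<nu> $ i \<noteq> \<omega> $ i} \<subseteq> I \<longrightarrow> (\<Sum>i\<in>{i. \<nu> $ i \<noteq> \<omega> $ i}. y $ i) \<le> bb \<nu>)
     \<and> (\<forall>x::real^'d. (\<forall>i. i \<notin> I \<longrightarrow> x $ i = 0) \<longrightarrow> (\<forall>k\<in>I. (\<Sum>i\<in>{i. r k $ i \<noteq> \<omega> $ i}. x $ i) = 0) \<longrightarrow> x = 0)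
     \<and> inj_on r I"
  using assms
proof (induction I rule: finite_induct)
  case empty
  show ?case
    by (rule exI[of _ 0], rule exI[of _ "\<lambda>_. \<omega>"]) (auto dest: D_empty simp: vec_eq_iff)
next
  case (insert k I)
  let ?D = "\<lambda>\<nu>::bool^'d. {i. \<nu> $ i \<noteq> \<omega> $ i}"
  from insert.IH obtain y r where
    t: "\<forall>k\<in>I. r k \<noteq> \<omega> \<and> k \<in> ?D (r k) \<and> ?D (r k) \<subseteq> I \<and> (\<Sum>i\<in>?D (r k). y $ i) = bb (r k)"
    and f: "\<forall>\<nu>. \<nu> \<noteq> \<omega> \<and> ?D \<nu> \<subseteq> I \<longrightarrow> (\<Sum>i\<in>?D \<nu>. y $ i) \<le> bb \<nu>"
    and inj: "\<forall>x::real^'d. (\<forall>i. i \<notin> I \<longrightarrow> x $ i = 0) \<longrightarrow> (\<forall>k\<in>I. (\<Sum>i\<in>?D (r k). x $ i) = 0) \<longrightarrow> x = 0"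
    and ij: "inj_on r I" by blast
  define C where "C = {\<nu>. \<nu> \<noteq> \<omega> \<and> k \<in> ?D \<nu> \<and> ?D \<nu> \<subseteq> insert k I}"
  define g where "g \<nu> = bb \<nu> - (\<Sum>i\<in>?D \<nu> - {k}. y $ i)" for \<nu>
  define e where "e = (\<chi> i. if i = k then \<not> \<omega> $ i else \<omega> $ i)"
  have eC: "e \<in> C" unfolding C_def e_def by (auto simp: vec_eq_iff)
  have finC: "finite C" by simp
  define m where "m = Min (g ` C)"
  have "m \<in> g ` C" unfolding m_def using eC finC by (intro Min_in) auto
  then obtain \<nu>s where \<nu>sC: "\<nu>s \<in> C" and m\<nu>s: "m = g \<nu>s" by blast
  have mle: "m \<le> g \<nu>" if "\<nu> \<in> C" for \<nu> unfolding m_def using that finC by simp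
  define y' where "y' = (\<chi> i. if i = k then m else y $ i)"
  define r' where "r' = r(k := \<nu>s)"
  have sumI: "(\<Sum>i\<in>S. z $ i) = (\<Sum>i\<in>S. y $ i)" if "S \<subseteq> I" and "z = y'" for S z
    using that insert.hyps unfolding y'_def by (intro sum.cong) auto
  have sumk: "(\<Sum>i\<in>?D \<nu>. y' $ i) = m + (\<Sum>i\<in>?D \<nu> - {k}. y $ i)" if "k \<in> ?D \<nu>" for \<nu>
  proof -
    have "(\<Sum>i\<in>?D \<nu>. y' $ i) = y' $ k + (\<Sum>i\<in>?D \<nu> - {k}. y' $ i)"
      using that by (subst sum.remove[of _ k]) auto
    also have "(\<Sum>i\<in>?D \<nu> - {k}. y' $ i) = (\<Sum>i\<in>?D \<nu> - {k}. y $ i)"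
      unfolding y'_def by (intro sum.cong) auto
    finally show ?thesis by (simp add: y'_def)
  qed
  have A: "\<forall>j\<in>insert k I. r' j \<noteq> \<omega> \<and> j \<in> ?D (r' j) \<and> ?D (r' j) \<subseteq> insert k I \<and> (\<Sum>i\<in>?D (r' j). y' $ i) = bb (r' j)"
  proof
    fix j assume j: "j \<in> insert k I"
    show "r' j \<noteq> \<omega> \<and> j \<in> ?D (r' j) \<and> ?D (r' j) \<subseteq> insert k I \<and> (\<Sum>i\<in>?D (r' j). y' $ i) = bb (r' j)"
    proof (cases "j = k")
      case True
      then show ?thesis using \<nu>sC sumk[of \<nu>s] m\<nu>s unfolding r'_def C_def g_def by auto
    next
      case False
      then have jI: "j \<in> I" using j by auto
      then show ?thesis using t sumI[of "?D (r j)" y'] False unfolding r'_def by auto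
    qed
  qed
  have B: "\<forall>\<nu>. \<nu> \<noteq> \<omega> \<and> ?D \<nu> \<subseteq> insert k I \<longrightarrow> (\<Sum>i\<in>?D \<nu>. y' $ i) \<le> bb \<nu>"
  proof (intro allI impI)
    fix \<nu> assume h: "\<nu> \<noteq> \<omega> \<and> ?D \<nu> \<subseteq> insert k I"
    show "(\<Sum>i\<in>?D \<nu>. y' $ i) \<le> bb \<nu>"
    proof (cases "k \<in> ?D \<nu>")
      case True
      then have "\<nu> \<in> C" using h unfolding C_def by auto
      then show ?thesis using mle[of \<nu>] sumk[OF True] unfolding g_def by simp
    next
      case False
      then have "?D \<nu> \<subseteq> I" using h by auto
      then show ?thesis using f h sumI[of "?D \<nu>" y'] by auto
    qed
  qed
  have Cc: "\<forall>x::real^'d. (\<forall>i. i \<notin> insert k I \<longrightarrow> x $ i = 0) \<longrightarrow> (\<forall>j\<in>insert k I. (\<Sum>i\<in>?D (r' j). x $ i) = 0) \<longrightarrow> x = 0"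
  proof (intro allI impI)
    fix x :: "real^'d"
    assume sx: "\<forall>i. i \<notin> insert k I \<longrightarrow> x $ i = 0"
      and ex: "\<forall>j\<in>insert k I. (\<Sum>i\<in>?D (r' j). x $ i) = 0"
    define x0 where "x0 = (\<chi> i. if i = k then 0 else x $ i)"
    have "x0 = 0"
    proof -
      have h1: "\<forall>i. i \<notin> I \<longrightarrow> x0 $ i = 0" using sx unfolding x0_def by auto
      have h2: "\<forall>j\<in>I. (\<Sum>i\<in>?D (r j). x0 $ i) = 0"
      proof
        fix j assume jI: "j \<in> I"
        have jk: "j \<noteq> k" using jI insert.hyps by auto
        have "(\<Sum>i\<in>?D (r j). x0 $ i) = (\<Sum>i\<in>?D (r j). x $ i)"
          unfolding x0_def using t jI insert.hyps by (intro sum.cong) auto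
        also have "\<dots> = 0" using ex jI jk unfolding r'_def by auto
        finally show "(\<Sum>i\<in>?D (r j). x0 $ i) = 0" .
      qed
      show ?thesis using inj h1 h2 by blast
    qed
    then have xo: "x $ i = 0" if "i \<noteq> k" for i using that unfolding x0_def by (simp add: vec_eq_iff) (metis)
    have kD: "k \<in> ?D \<nu>s" using \<nu>sC unfolding C_def by auto
    have "(\<Sum>i\<in>?D \<nu>s. x $ i) = x $ k + (\<Sum>i\<in>?D \<nu>s - {k}. x $ i)"
      using kD by (subst sum.remove[of _ k]) auto
    also have "(\<Sum>i\<in>?D \<nu>s - {k}. x $ i) = 0" using xo by (intro sum.neutral) auto
    finally have "x $ k = 0" using ex unfolding r'_def by auto
    then show "x = 0" using xo by (simp add: vec_eq_iff) (metis)
  qed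
    have kD: "k \<in> ?D \<nu>s" using \<nu>sC unfolding C_def by auto
    have "r j \<noteq> \<nu>s" if "j \<in> I" for j
      using t that insert.hyps kD by blast
    then have "inj_on r' (insert k I)"
      using ij insert.hyps unfolding r'_def by (auto simp: inj_on_def)
  then show ?case using A B Cc by blast
qed

theorem lemma4:
  fixes P :: "bool ^ 'd \<Rightarrow> real" and \<omega> :: "bool ^ 'd"
  assumes "\<And>\<nu>. P \<nu> > 0"
    and "(\<Sum>\<nu>\<in>UNIV. P \<nu>) = 1"
  shows "\<exists>y. is_vertex_om P \<omega> y"
proof -
  obtain y r where
    t: "\<forall>k\<in>(UNIV::'d set). r k \<noteq> \<omega> \<and> k \<in> {i. r k $ i \<noteq> \<omega> $ i} \<and> {i. r k $ i \<noteq> \<omega> $ i} \<subseteq> UNIV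
                  \<and> (\<Sum>i\<in>{i. r k $ i \<noteq> \<omega> $ i}. y $ i) = b_om P \<omega> (r k)"
    and f: "\<forall>\<nu>. \<nu> \<noteq> \<omega> \<and> {i. \<nu> $ i \<noteq> \<omega> $ i} \<subseteq> UNIV \<longrightarrow> (\<Sum>i\<in>{i. \<nu> $ i \<noteq> \<omega> $ i}. y $ i) \<le> b_om P \<omega> \<nu>"
    and inj: "\<forall>x::real^'d. (\<forall>i. i \<notin> UNIV \<longrightarrow> x $ i = 0) \<longrightarrow> (\<forall>k\<in>UNIV. (\<Sum>i\<in>{i. r k $ i \<noteq> \<omega> $ i}. x $ i) = 0) \<longrightarrow> x = 0"
    and ij: "inj_on r UNIV"
    using claim[of "UNIV::'d set" \<omega> "b_om P \<omega>"] by auto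
  define M where "M = ((\<chi> k i. A_om \<omega> (r k) i) :: real ^ 'd ^ 'd)"
  have Mv: "M *v x = (\<chi> k. \<Sum>i\<in>{i. r k $ i \<noteq> \<omega> $ i}. x $ i)" for x
    unfolding M_def matrix_vector_mult_def by (simp add: row_sum_eq)
  have "\<forall>x. M *v x = 0 \<longrightarrow> x = 0"
    using inj by (auto simp: Mv vec_eq_iff)
  then have "invertible M"
    using matrix_left_invertible_ker invertible_left_inverse by blast
  moreover have "y \<in> polyhedron_om P \<omega>"
    using f unfolding polyhedron_om_def by (simp add: row_sum_eq)
  moreover have "M *v y = (\<chi> k. b_om P \<omega> (r k))"
    using t by (simp add: Mv)
  ultimately show ?thesis
    unfolding is_vertex_om_def M_def using t ij by blast
qed

end
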